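(* Let $d,r$ be positive integers, let $n=dr$, and let $\alpha\in\mathcal S_n$ have cycle structure $d^r$ (i.e. $r$ disjoint cycles each of length $d$). Then $(\alpha,\alpha,\alpha;(12))\in\mathrm{Par}(n)$ if and only if $d\not\equiv2\pmod 4$.
   Context: A Latin square of order $n$ is an $n\times n$ array with rows, columns and symbols indexed by $[n]$, each symbol occurring once in each row and each column, with triple set $O(L)$. Permutations act on the right. A paratopism $(\alpha,\beta,\gamma;(12))$ maps $L$ to $L^\sigma$ with triple set $\{(y\beta,x\alpha,z\gamma):(x,y,z)\in O(L)\}$; it is an autoparatopism of $L$ if $L^\sigma=L$. $\mathrm{Par}(n)$ is the set of paratopisms that are autoparatopisms of at least one Latin square of order $n$. *)

theory Defs
  imports "HOL-Combinatorics.Permutations"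
begin

text \<open>Latin squares of order n with rows, columns, symbols indexed by {0..<n}
  (a relabelling of [n]). A Latin square is given by its entry function L,
  with triple set O(L) = {(x, y, L x y) | x y < n}.\<close>

definition latin_square :: "nat \<Rightarrow> (nat \<Rightarrow> nat \<Rightarrow> nat) \<Rightarrow> bool" where
  "latin_square n L \<longleftrightarrow>
     (\<forall>x<n. \<forall>y<n. L x y < n) \<and>
     (\<forall>x<n. inj_on (\<lambda>y. L x y) {0..<n}) \<and>
     (\<forall>y<n. inj_on (\<lambda>x. L x y) {0..<n})"

definition triples :: "nat \<Rightarrow> (nat \<Rightarrow> nat \<Rightarrow> nat) \<Rightarrow> (nat \<times> nat \<times> nat) set" where
  "triples n L = {(x, y, L x y) | x y. x < n \<and> y < n}"

text \<open>Image of L under the paratopism (alpha, beta, gamma; (12)): triple set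
  {(y beta, x alpha, z gamma) : (x,y,z) in O(L)}. Permutations act on the right,
  so x alpha is written alpha x.\<close>

definition paratopism12_image ::
  "(nat \<Rightarrow> nat) \<Rightarrow> (nat \<Rightarrow> nat) \<Rightarrow> (nat \<Rightarrow> nat) \<Rightarrow> (nat \<times> nat \<times> nat) set \<Rightarrow> (nat \<times> nat \<times> nat) set" where
  "paratopism12_image \<alpha> \<beta> \<gamma> T = {(\<beta> y, \<alpha> x, \<gamma> z) | x y z. (x, y, z) \<in> T}"

definition autoparatopism12 ::
  "nat \<Rightarrow> (nat \<Rightarrow> nat) \<Rightarrow> (nat \<Rightarrow> nat) \<Rightarrow> (nat \<Rightarrow> nat) \<Rightarrow> (nat \<Rightarrow> nat \<Rightarrow> nat) \<Rightarrow> bool" where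
  "autoparatopism12 n \<alpha> \<beta> \<gamma> L \<longleftrightarrow>
     paratopism12_image \<alpha> \<beta> \<gamma> (triples n L) = triples n L"

definition in_Par12 :: "nat \<Rightarrow> (nat \<Rightarrow> nat) \<Rightarrow> (nat \<Rightarrow> nat) \<Rightarrow> (nat \<Rightarrow> nat) \<Rightarrow> bool" where
  "in_Par12 n \<alpha> \<beta> \<gamma> \<longleftrightarrow>
     (\<exists>L. latin_square n L \<and> autoparatopism12 n \<alpha> \<beta> \<gamma> L)"

text \<open>alpha in S_n has cycle structure d^r: it consists of exactly r disjoint
  cycles, each of length d, i.e. every point of {0..<n} lies on a cycle of
  length exactly d, and (with n = d r) there are r such cycles.\<close>

definition cycle_structure_uniform :: "nat \<Rightarrow> (nat \<Rightarrow> nat) \<Rightarrow> nat \<Rightarrow> nat \<Rightarrow> bool" where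
  "cycle_structure_uniform n \<alpha> d r \<longleftrightarrow>
     \<alpha> permutes {0..<n} \<and> n = d * r \<and>
     (\<forall>x<n. card {(\<alpha> ^^ k) x | k. True} = d)"

end

theory Submission
  imports Defs
begin


definition Af :: "int \<Rightarrow> int \<Rightarrow> int" where "Af k u = (if u < k then u + k else u - k)"
definition Hf :: "int \<Rightarrow> bool \<Rightarrow> int \<Rightarrow> int" where
  "Hf k b t = (if b then (if even t then t div 2 else 2*k + Af k (t div 2))
               else (if even t then (if t = 0 then 0 else 2*k + t div 2) else 1 + Af k (t div 2)))"
definition Kf :: "int \<Rightarrow> bool \<Rightarrow> int \<Rightarrow> int" where
  "Kf k b t = (if b then (if even t then (if t = 0 then 0 else 4*k - t div 2) else 2*k - Af k (t div 2))
               else (if even t then (if t = 0 then 0 else 2*k - t div 2) else 4*k - 1 - Af k (t div 2)))"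

lemma par_cases:
  fixes t :: int
  obtains u where "t = 2*u" "even t" "t div 2 = u" | u where "t = 2*u + 1" "odd t" "t div 2 = u"
proof (cases "even t")
  case True
  have "t = 2 * (t div 2)" using True by simp
  thus ?thesis using that(1)[of "t div 2"] True by simp
next
  case False
  have "t = 2 * (t div 2) + 1" using False odd_two_times_div_two_succ[of t] by simp
  thus ?thesis using that(2)[of "t div 2"] False by simp
qed

lemma Hr: "0 < k \<Longrightarrow> 0 \<le> t \<Longrightarrow> t < 4*k \<Longrightarrow> 0 \<le> Hf k b t \<and> Hf k b t < 4*k"
  by (cases t rule: par_cases) (auto simp: Hf_def Af_def)

lemma HI: "0 < k \<Longrightarrow> 0 \<le> t1 \<Longrightarrow> t1 < 4*k \<Longrightarrow> 0 \<le> t2 \<Longrightarrow> t2 < 4*k \<Longrightarrow> Hf k b t1 = Hf k b t2 \<Longrightarrow> t1 = t2"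
  by (cases t1 rule: par_cases; cases t2 rule: par_cases) (auto simp: Hf_def Af_def split: if_splits)

lemma Kr: "0 < k \<Longrightarrow> 0 \<le> t \<Longrightarrow> t < 4*k \<Longrightarrow> 0 \<le> Kf k b t \<and> Kf k b t < 4*k"
  by (cases t rule: par_cases) (auto simp: Kf_def Af_def)

lemma KI: "0 < k \<Longrightarrow> 0 \<le> t1 \<Longrightarrow> t1 < 4*k \<Longrightarrow> 0 \<le> t2 \<Longrightarrow> t2 < 4*k \<Longrightarrow> Kf k b t1 = Kf k b t2 \<Longrightarrow> t1 = t2"
  by (cases t1 rule: par_cases; cases t2 rule: par_cases) (auto simp: Kf_def Af_def split: if_splits)

lemma Kd: "0 < k \<Longrightarrow> 0 \<le> t \<Longrightarrow> t < 4*k \<Longrightarrow>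
   Hf k (b = even t) t - t - Kf k b t = 0 \<or> Hf k (b = even t) t - t - Kf k b t = - (4*k)"
  by (cases t rule: par_cases) (auto simp: Hf_def Kf_def Af_def)

lemma A1: "0 < k \<Longrightarrow> 0 < t \<Longrightarrow> t < 4*k \<Longrightarrow>
   Hf k b t - t - Hf k (\<not>(b = even t)) (4*k - t) \<in> {0, 4*k, -(4*k)}"
proof (cases t rule: par_cases)
  case (1 u)
  have "4*k - t = 2*(2*k - u)" using 1 by simp
  hence e: "even (4*k - t)" "(4*k - t) div 2 = 2*k - u" by simp_all
  assume "0 < k" "0 < t" "t < 4*k"
  thus ?thesis unfolding Hf_def e using 1 by (auto simp: Af_def)
next
  case (2 u)
  have eq: "4*k - t = 2*(2*k - u - 1) + 1" using 2 by simp
  have e1: "odd (4*k - t)" using eq by (metis even_plus_one_iff dvd_triv_left)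
  have e2: "(4*k - t) div 2 = 2*k - u - 1" unfolding eq by simp
  note e = e1 e2
  assume "0 < k" "0 < t" "t < 4*k"
  thus ?thesis unfolding Hf_def e1 e2 using 2 by (auto simp: Af_def)
qed


lemma small_dvd: fixes D z :: int assumes "D dvd z" "\<bar>z\<bar> < D" shows "z = 0"
proof (rule ccontr)
  assume "z \<noteq> 0"
  hence "\<bar>D\<bar> \<le> \<bar>z\<bar>" using assms(1) by (intro dvd_imp_le_int) auto
  thus False using assms(2) by simp
qed

lemma even_mod_even: fixes D z :: int assumes "even D" shows "even (z mod D) \<longleftrightarrow> even z"
proof -
  have "z mod D mod 2 = z mod 2" using assms by (simp add: mod_mod_cancel)
  thus ?thesis by (simp add: even_iff_mod_2_eq_zero)
qed

definition Ff :: "int \<Rightarrow> int \<Rightarrow> int \<Rightarrow> int" where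
  "Ff k j y = (j + Hf k (even j) ((y - j) mod (4*k))) mod (4*k)"

lemma F_range: "0 < k \<Longrightarrow> 0 \<le> Ff k j y \<and> Ff k j y < 4*k"
  unfolding Ff_def by simp

lemma F_row: assumes k: "0 < k" and r: "0 \<le> a" "a < 4*k" "0 \<le> b" "b < 4*k"
  and e: "Ff k x a = Ff k x b" shows "a = b"
proof -
  let ?D = "4*k" and ?s = "even x"
  let ?ta = "(a - x) mod ?D" and ?tb = "(b - x) mod ?D"
  have "?D dvd (x + Hf k ?s ?ta) - (x + Hf k ?s ?tb)" using e unfolding Ff_def using mod_eq_dvd_iff by blast
  hence "?D dvd Hf k ?s ?ta - Hf k ?s ?tb" by simp
  moreover have "0 \<le> Hf k ?s ?ta \<and> Hf k ?s ?ta < ?D" "0 \<le> Hf k ?s ?tb \<and> Hf k ?s ?tb < ?D"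
    using Hr k by simp_all
  ultimately have "Hf k ?s ?ta - Hf k ?s ?tb = 0" by (intro small_dvd[of ?D]) auto
  hence "?ta = ?tb" using HI[OF k, of ?ta ?tb ?s] k by simp
  hence "?D dvd (a - x) - (b - x)" using mod_eq_dvd_iff by blast
  hence "?D dvd a - b" by simp
  hence "a - b = 0" using r by (intro small_dvd[of ?D]) auto
  thus ?thesis by simp
qed

lemma F_colform: assumes k: "0 < k"
  shows "Ff k a y = (y + Kf k (even y) ((y - a) mod (4*k))) mod (4*k)"
proof -
  let ?D = "4*k"
  let ?t = "(y - a) mod ?D"
  have ev: "even a \<longleftrightarrow> (even y = even ?t)"
  proof -
    have "even ?t \<longleftrightarrow> even (y - a)" by (rule even_mod_even) simp
    thus ?thesis by auto
  qed
  have tr: "0 \<le> ?t" "?t < ?D" using k by simp_all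
  have kd: "Hf k (even y = even ?t) ?t - ?t - Kf k (even y) ?t = 0 \<or>
            Hf k (even y = even ?t) ?t - ?t - Kf k (even y) ?t = - ?D" using Kd[OF k tr] .
  have ya: "y - a = ?D * ((y - a) div ?D) + ?t" by simp
  have "?D dvd (a + Hf k (even a) ?t) - (y + Kf k (even y) ?t)"
  proof -
    have eq: "(a + Hf k (even a) ?t) - (y + Kf k (even y) ?t)
        = (Hf k (even y = even ?t) ?t - ?t - Kf k (even y) ?t) - ?D * ((y - a) div ?D)"
      using ev ya by (simp add: algebra_simps)
    have dv1: "?D dvd (Hf k (even y = even ?t) ?t - ?t - Kf k (even y) ?t)" using kd by auto
    show ?thesis unfolding eq by (rule dvd_diff[OF dv1]) simp
  qed
  thus ?thesis unfolding Ff_def using mod_eq_dvd_iff by blast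
qed

lemma F_col: assumes k: "0 < k" and r: "0 \<le> a" "a < 4*k" "0 \<le> b" "b < 4*k"
  and e: "Ff k a y = Ff k b y" shows "a = b"
proof -
  let ?D = "4*k" and ?s = "even y"
  let ?ta = "(y - a) mod ?D" and ?tb = "(y - b) mod ?D"
  have "(y + Kf k ?s ?ta) mod ?D = (y + Kf k ?s ?tb) mod ?D" using e F_colform[OF k] by metis
  hence "?D dvd (y + Kf k ?s ?ta) - (y + Kf k ?s ?tb)" using mod_eq_dvd_iff by blast
  hence "?D dvd Kf k ?s ?ta - Kf k ?s ?tb" by simp
  moreover have "0 \<le> Kf k ?s ?ta \<and> Kf k ?s ?ta < ?D" "0 \<le> Kf k ?s ?tb \<and> Kf k ?s ?tb < ?D"
    using Kr k by simp_all
  ultimately have "Kf k ?s ?ta - Kf k ?s ?tb = 0" by (intro small_dvd[of ?D]) auto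
  hence "?ta = ?tb" using KI[OF k, of ?ta ?tb ?s] k by simp
  hence "?D dvd (y - a) - (y - b)" using mod_eq_dvd_iff by blast
  hence "?D dvd b - a" by simp
  hence "b - a = 0" using r by (intro small_dvd[of ?D]) auto
  thus ?thesis by simp
qed

lemma F_equiv: assumes k: "0 < k" and r: "0 \<le> x" "x < 4*k" "0 \<le> y" "y < 4*k"
  shows "Ff k ((y+1) mod (4*k)) ((x+1) mod (4*k)) = (Ff k x y + 1) mod (4*k)"
proof -
  let ?D = "4*k"
  let ?t = "(y - x) mod ?D" and ?j = "(y+1) mod ?D" and ?b = "even x"
  have evD: "even ?D" by simp
  have ev_y: "even y \<longleftrightarrow> (?b = even ?t)"
  proof -
    have "even ?t \<longleftrightarrow> even (y - x)" by (rule even_mod_even[OF evD])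
    thus ?thesis by auto
  qed
  have ev_j: "even ?j \<longleftrightarrow> \<not> (?b = even ?t)"
  proof -
    have "even ?j \<longleftrightarrow> even (y + 1)" by (rule even_mod_even[OF evD])
    thus ?thesis using ev_y by auto
  qed
  have arg: "((x+1) mod ?D - ?j) mod ?D = (- ?t) mod ?D"
    by (simp add: mod_diff_eq mod_minus_eq)
  have lhs: "Ff k ?j ((x+1) mod ?D) = (?j + Hf k (\<not> (?b = even ?t)) ((- ?t) mod ?D)) mod ?D"
    unfolding Ff_def arg ev_j by simp
  have rhs: "(Ff k x y + 1) mod ?D = (x + Hf k ?b ?t + 1) mod ?D"
    unfolding Ff_def by (simp add: mod_add_left_eq)
  obtain q2 where jy: "?j = y + 1 - ?D * q2" using mult_div_mod_eq[of ?D "y+1"]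
    by (metis add_diff_cancel_left')
  obtain q1 where yx: "y - x = ?D * q1 + ?t" using mult_div_mod_eq[of ?D "y-x"] by metis
  have tr: "0 \<le> ?t" "?t < ?D" using k by simp_all
  show ?thesis
  proof (cases "?t = 0")
    case True
    have h0: "Hf k c 0 = 0" for c unfolding Hf_def by simp
    have "?D dvd (?j + Hf k (\<not> (?b = even ?t)) ((- ?t) mod ?D)) - (x + Hf k ?b ?t + 1)"
    proof -
      have "(?j + Hf k (\<not> (?b = even ?t)) ((- ?t) mod ?D)) - (x + Hf k ?b ?t + 1)
          = ?D * q1 - ?D * q2"
      proof -
        have "Hf k (\<not> (?b = even ?t)) ((- ?t) mod ?D) = 0" "Hf k ?b ?t = 0" using True h0 by simp_all
        thus ?thesis using jy yx True by linarith
      qed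
      thus ?thesis by (metis right_diff_distrib dvd_triv_left)
    qed
    thus ?thesis unfolding lhs rhs by (simp add: mod_eq_dvd_iff)
  next
    case False
    hence tp: "0 < ?t" using tr by simp
    have mt: "(- ?t) mod ?D = ?D - ?t"
    proof -
      have "(- ?t) mod ?D = (?D - ?t) mod ?D" using mod_add_self1[of ?D "- ?t"] by simp
      also have "\<dots> = ?D - ?t" using tp tr by (intro mod_pos_pos_trivial) auto
      finally show ?thesis .
    qed
    have a1: "Hf k ?b ?t - ?t - Hf k (\<not> (?b = even ?t)) (?D - ?t) \<in> {0, ?D, - ?D}"
      using A1[OF k tp tr(2)] .
    have "?D dvd Hf k ?b ?t - ?t - Hf k (\<not> (?b = even ?t)) (?D - ?t)" using a1 by auto
    then obtain c where c: "Hf k ?b ?t - ?t - Hf k (\<not> (?b = even ?t)) (?D - ?t) = ?D * c" by blast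
    have "?D dvd (?j + Hf k (\<not> (?b = even ?t)) (?D - ?t)) - (x + Hf k ?b ?t + 1)"
    proof -
      have "(?j + Hf k (\<not> (?b = even ?t)) (?D - ?t)) - (x + Hf k ?b ?t + 1)
          = ?D * q1 - ?D * q2 - ?D * c"
        using c jy yx by linarith
      thus ?thesis by (metis right_diff_distrib dvd_triv_left)
    qed
    thus ?thesis unfolding lhs rhs mt by (simp add: mod_eq_dvd_iff)
  qed
qed


lemma orbit_period:
  assumes inj: "inj f" and c: "card {(f^^k) z | k. True} = d" and d: "0 < d"
  shows "(f^^d) z = z" and "\<And>q. 0 < q \<Longrightarrow> (f^^q) z = z \<Longrightarrow> d \<le> q"
proof -
  let ?S = "{(f^^k) z | k. True}"
  have fin: "finite ?S" using c d card.infinite by fastforce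
  have mn: "d \<le> q" if q: "0 < q" "(f^^q) z = z" for q
  proof -
    have "?S \<subseteq> (\<lambda>k. (f^^k) z) ` {..<q}"
    proof
      fix w assume "w \<in> ?S"
      then obtain k where "w = (f^^k) z" by blast
      moreover have "(f^^(k mod q)) z = (f^^k) z" using funpow_mod_eq[where f=f and n=q and x=z and m=k] q by simp
      ultimately show "w \<in> (\<lambda>k. (f^^k) z) ` {..<q}" using q(1) by (metis imageI lessThan_iff mod_less_divisor)
    qed
    hence "card ?S \<le> card ((\<lambda>k. (f^^k) z) ` {..<q})" by (simp add: card_mono)
    also have "\<dots> \<le> q" using card_image_le by fastforce
    finally show ?thesis using c by simp
  qed
  then show "\<And>q. 0 < q \<Longrightarrow> (f^^q) z = z \<Longrightarrow> d \<le> q" by blast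
  have "\<not> inj_on (\<lambda>k. (f^^k) z) {..d}"
  proof
    assume i: "inj_on (\<lambda>k. (f^^k) z) {..d}"
    have "(\<lambda>k. (f^^k) z) ` {..d} \<subseteq> ?S" by blast
    hence "card ((\<lambda>k. (f^^k) z) ` {..d}) \<le> d" using c fin card_mono by metis
    thus False using card_image[OF i] by simp
  qed
  then obtain i j where ij: "i \<le> d" "j \<le> d" "i \<noteq> j" "(f^^i) z = (f^^j) z"
    unfolding inj_on_def by auto
  have key: "(f^^(j-i)) z = z" if "i < j" "(f^^i) z = (f^^j) z" for i j
  proof -
    have "(f^^i) ((f^^(j-i)) z) = (f^^i) z"
      using that by (metis add_diff_inverse_nat funpow_add less_imp_not_less o_apply)
    thus ?thesis using inj_fn[OF inj, of i] by (meson injD)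
  qed
  obtain p where p: "0 < p" "p \<le> d" "(f^^p) z = z"
  proof (cases "i < j")
    case True thus ?thesis using that[of "j-i"] key ij by auto
  next
    case False thus ?thesis using that[of "i-j"] key[of j i] ij by auto
  qed
  with mn[OF p(1) p(3)] show "(f^^d) z = z" by simp
qed

lemma auto_iff:
  assumes perm: "\<alpha> permutes {0..<n}" and rng: "\<forall>x<n. \<forall>y<n. L x y < n"
  shows "autoparatopism12 n \<alpha> \<alpha> \<alpha> L \<longleftrightarrow> (\<forall>x<n. \<forall>y<n. L (\<alpha> y) (\<alpha> x) = \<alpha> (L x y))"
proof -
  have inr: "\<alpha> x < n" if "x < n" for x using permutes_in_image[OF perm, of x] that by simp
  have invr: "inv \<alpha> x < n" if "x < n" for x
    using permutes_in_image[OF permutes_inv[OF perm], of x] that by simp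
  have ai: "\<alpha> (inv \<alpha> x) = x" for x using permutes_inverses(1)[OF perm] by simp
  show ?thesis
  proof
    assume A: "autoparatopism12 n \<alpha> \<alpha> \<alpha> L"
    show "\<forall>x<n. \<forall>y<n. L (\<alpha> y) (\<alpha> x) = \<alpha> (L x y)"
    proof (intro allI impI)
      fix x y assume xy: "x < n" "y < n"
      have "(\<alpha> y, \<alpha> x, \<alpha> (L x y)) \<in> paratopism12_image \<alpha> \<alpha> \<alpha> (triples n L)"
        unfolding paratopism12_image_def triples_def using xy by blast
      hence "(\<alpha> y, \<alpha> x, \<alpha> (L x y)) \<in> triples n L" using A unfolding autoparatopism12_def by simp
      thus "L (\<alpha> y) (\<alpha> x) = \<alpha> (L x y)" unfolding triples_def by auto
    qed
  next
    assume E: "\<forall>x<n. \<forall>y<n. L (\<alpha> y) (\<alpha> x) = \<alpha> (L x y)"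
    have "paratopism12_image \<alpha> \<alpha> \<alpha> (triples n L) \<subseteq> triples n L"
    proof
      fix t assume "t \<in> paratopism12_image \<alpha> \<alpha> \<alpha> (triples n L)"
      then obtain x y where xy: "x < n" "y < n" "t = (\<alpha> y, \<alpha> x, \<alpha> (L x y))"
        unfolding paratopism12_image_def triples_def by blast
      thus "t \<in> triples n L" unfolding triples_def using E inr by force
    qed
    moreover have "triples n L \<subseteq> paratopism12_image \<alpha> \<alpha> \<alpha> (triples n L)"
    proof
      fix t assume "t \<in> triples n L"
      then obtain x y where xy: "x < n" "y < n" "t = (x, y, L x y)"
        unfolding triples_def by blast
      let ?x = "inv \<alpha> y" and ?y = "inv \<alpha> x"
      have "t = (\<alpha> ?y, \<alpha> ?x, \<alpha> (L ?x ?y))" using xy E invr ai by metis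
      moreover have "(?x, ?y, L ?x ?y) \<in> triples n L" unfolding triples_def using xy invr by blast
      ultimately show "t \<in> paratopism12_image \<alpha> \<alpha> \<alpha> (triples n L)"
        unfolding paratopism12_image_def by blast
    qed
    ultimately show "autoparatopism12 n \<alpha> \<alpha> \<alpha> L" unfolding autoparatopism12_def by blast
  qed
qed

lemma funpow_lt: fixes n :: nat assumes "\<alpha> permutes {0..<n}" "x < n" shows "(\<alpha>^^i) x < n"
proof (induction i)
  case 0 thus ?case using assms by simp
next
  case (Suc i)
  have "\<alpha> ((\<alpha>^^i) x) \<in> {0..<n}" using Suc permutes_in_image[OF assms(1)] by simp
  thus ?case by simp
qed

lemma necessity:
  assumes d0: "0 < d" and n: "n = d * r" and r0: "0 < r"
    and perm: "\<alpha> permutes {0..<n}" and cs: "cycle_structure_uniform n \<alpha> d r"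
    and d2: "d mod 4 = 2"
  shows "\<not> in_Par12 n \<alpha> \<alpha> \<alpha>"
proof
  assume "in_Par12 n \<alpha> \<alpha> \<alpha>"
  then obtain L where LS: "latin_square n L" and A: "autoparatopism12 n \<alpha> \<alpha> \<alpha> L"
    unfolding in_Par12_def by blast
  have rng: "\<forall>x<n. \<forall>y<n. L x y < n" using LS unfolding latin_square_def by blast
  have E: "\<And>x y. x < n \<Longrightarrow> y < n \<Longrightarrow> L (\<alpha> y) (\<alpha> x) = \<alpha> (L x y)"
    using auto_iff[OF perm rng] A by blast
  have inj: "inj \<alpha>" using perm permutes_inj by blast
  have orb: "\<And>x. x < n \<Longrightarrow> card {(\<alpha> ^^ k) x | k. True} = d"
    using cs unfolding cycle_structure_uniform_def by blast
  have lt: "\<And>i x. x < n \<Longrightarrow> (\<alpha>^^i) x < n" using funpow_lt[OF perm] by blast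
  have ev: "\<And>x y. x < n \<Longrightarrow> y < n \<Longrightarrow> L ((\<alpha>^^(2*i)) x) ((\<alpha>^^(2*i)) y) = (\<alpha>^^(2*i)) (L x y)" for i
  proof (induction i)
    case 0 thus ?case by simp
  next
    case (Suc i)
    have "L ((\<alpha>^^(2*Suc i)) x) ((\<alpha>^^(2*Suc i)) y)
        = L (\<alpha> (\<alpha> ((\<alpha>^^(2*i)) x))) (\<alpha> (\<alpha> ((\<alpha>^^(2*i)) y)))" by simp
    also have "\<dots> = \<alpha> (\<alpha> (L ((\<alpha>^^(2*i)) x) ((\<alpha>^^(2*i)) y)))"
    proof -
      have a: "(\<alpha>^^(2*i)) x < n" "(\<alpha>^^(2*i)) y < n" using lt Suc.prems by auto
      have b: "\<alpha> ((\<alpha>^^(2*i)) x) < n" "\<alpha> ((\<alpha>^^(2*i)) y) < n"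
        using lt[of _ 1] a by auto
      show ?thesis using E[OF b(2) b(1)] E[OF a] by simp
    qed
    also have "\<dots> = (\<alpha>^^(2*Suc i)) (L x y)" using Suc by simp
    finally show ?case .
  qed
  obtain k where e: "d = 2 * (2*k+1)"
  proof -
    have "d = 2 * (2*(d div 4)+1)" using d2 by presburger
    thus ?thesis using that by blast
  qed
  define e where "e = 2*k+1"
  have n0: "0 < n" using n d0 r0 by simp
  define y where "y = (\<alpha>^^e) 0"
  have y: "y < n" using lt n0 y_def by simp
  have ee: "e + e = d" using e e_def by simp
  have "(\<alpha>^^e) y = (\<alpha>^^(e+e)) 0" unfolding y_def by (simp add: funpow_add)
  also have "\<dots> = (\<alpha>^^d) 0" using ee by simp
  also have "\<dots> = 0" using orbit_period(1)[OF inj orb[OF n0] d0] .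
  finally have ey: "(\<alpha>^^e) y = 0" .
  have "(\<alpha>^^e) (L 0 y) = \<alpha> ((\<alpha>^^(2*k)) (L 0 y))" unfolding e_def by simp
  also have "\<dots> = \<alpha> (L ((\<alpha>^^(2*k)) 0) ((\<alpha>^^(2*k)) y))" using ev[OF n0 y] by simp
  also have "\<dots> = L (\<alpha> ((\<alpha>^^(2*k)) y)) (\<alpha> ((\<alpha>^^(2*k)) 0))" using E lt n0 y by simp
  also have "\<dots> = L ((\<alpha>^^e) y) ((\<alpha>^^e) 0)" unfolding e_def by simp
  also have "\<dots> = L 0 y" using ey y_def by simp
  finally have fx: "(\<alpha>^^e) (L 0 y) = L 0 y" .
  have "L 0 y < n" using rng n0 y by blast
  from orbit_period(2)[OF inj orb[OF this] d0 _ fx] have "d \<le> e" unfolding e_def by simp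
  thus False using e e_def by simp
qed

lemma transport:
  fixes n :: nat
  assumes perm: "\<alpha> permutes {0..<n}" and bij: "bij_betw \<gamma> {0..<n} {0..<n}"
    and conj: "\<forall>y<n. \<gamma> (af y) = \<alpha> (\<gamma> y)" and a0: "\<forall>y<n. af y < n"
    and LS: "latin_square n L0" and E0: "\<forall>x<n. \<forall>y<n. L0 (af y) (af x) = af (L0 x y)"
  shows "in_Par12 n \<alpha> \<alpha> \<alpha>"
proof -
  define g where "g = inv_into {0..<n} \<gamma>"
  have g1: "g x < n" if "x < n" for x
    using bij_betw_inv_into[OF bij] that unfolding g_def bij_betw_def by auto
  have g2: "\<gamma> (g x) = x" if "x < n" for x
    using bij that unfolding g_def by (simp add: bij_betw_inv_into_right)
  have g3: "g (\<gamma> y) = y" if "y < n" for y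
    using bij that unfolding g_def by (simp add: bij_betw_inv_into_left)
  have gr: "\<gamma> y < n" if "y < n" for y using bij that unfolding bij_betw_def by auto
  have ginj: "\<gamma> a = \<gamma> b \<Longrightarrow> a < n \<Longrightarrow> b < n \<Longrightarrow> a = b" for a b
    using bij unfolding bij_betw_def inj_on_def by auto
  have ar: "\<alpha> x < n" if "x < n" for x
  proof -
    have "\<alpha> x \<in> {0..<n}" using permutes_in_image[OF perm] that by simp
    thus ?thesis by simp
  qed
  have ga: "g (\<alpha> x) = af (g x)" if "x < n" for x
  proof -
    have "\<gamma> (af (g x)) = \<alpha> x" using conj g1 g2 that by simp
    hence "g (\<alpha> x) = g (\<gamma> (af (g x)))" by simp
    also have "\<dots> = af (g x)" using g3 a0 g1 that by simp
    finally show ?thesis .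
  qed
  have L0r: "\<forall>x<n. \<forall>y<n. L0 x y < n" and L0row: "\<forall>x<n. inj_on (\<lambda>y. L0 x y) {0..<n}"
    and L0col: "\<forall>y<n. inj_on (\<lambda>x. L0 x y) {0..<n}" using LS unfolding latin_square_def by auto
  define L where "L x y = \<gamma> (L0 (g x) (g y))" for x y
  have Lr: "\<forall>x<n. \<forall>y<n. L x y < n" unfolding L_def using gr L0r g1 by simp
  have "latin_square n L"
    unfolding latin_square_def
  proof (intro conjI allI impI)
    show "\<And>x y. x < n \<Longrightarrow> y < n \<Longrightarrow> L x y < n" using Lr by simp
  next
    fix x assume x: "x < n"
    show "inj_on (\<lambda>y. L x y) {0..<n}"
    proof (rule inj_onI)
      fix a b assume ab: "a \<in> {0..<n}" "b \<in> {0..<n}" "L x a = L x b"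
      have "\<gamma> (L0 (g x) (g a)) = \<gamma> (L0 (g x) (g b))" using ab(3) unfolding L_def by simp
      moreover have "L0 (g x) (g a) < n" "L0 (g x) (g b) < n" using L0r g1 x ab by auto
      ultimately have "L0 (g x) (g a) = L0 (g x) (g b)" using ginj by blast
      moreover have "inj_on (\<lambda>y. L0 (g x) y) {0..<n}" using L0row g1 x by blast
      ultimately have "g a = g b" using g1 ab by (auto dest: inj_onD)
      hence "\<gamma> (g a) = \<gamma> (g b)" by simp
      thus "a = b" using g2 ab by simp
    qed
  next
    fix y assume y: "y < n"
    show "inj_on (\<lambda>x. L x y) {0..<n}"
    proof (rule inj_onI)
      fix a b assume ab: "a \<in> {0..<n}" "b \<in> {0..<n}" "L a y = L b y"
      have "\<gamma> (L0 (g a) (g y)) = \<gamma> (L0 (g b) (g y))" using ab(3) unfolding L_def by simp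
      moreover have "L0 (g a) (g y) < n" "L0 (g b) (g y) < n" using L0r g1 y ab by auto
      ultimately have "L0 (g a) (g y) = L0 (g b) (g y)" using ginj by blast
      moreover have "inj_on (\<lambda>x. L0 x (g y)) {0..<n}" using L0col g1 y by blast
      ultimately have "g a = g b" using g1 ab by (auto dest: inj_onD)
      hence "\<gamma> (g a) = \<gamma> (g b)" by simp
      thus "a = b" using g2 ab by simp
    qed
  qed
  moreover have "\<forall>x<n. \<forall>y<n. L (\<alpha> y) (\<alpha> x) = \<alpha> (L x y)"
  proof (intro allI impI)
    fix x y assume xy: "x < n" "y < n"
    have "L (\<alpha> y) (\<alpha> x) = \<gamma> (L0 (af (g y)) (af (g x)))" unfolding L_def using ga xy by simp
    also have "\<dots> = \<gamma> (af (L0 (g x) (g y)))" using E0 g1 xy by simp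
    also have "\<dots> = \<alpha> (L x y)" unfolding L_def using conj L0r g1 xy by simp
    finally show "L (\<alpha> y) (\<alpha> x) = \<alpha> (L x y)" .
  qed
  ultimately show ?thesis unfolding in_Par12_def using auto_iff[OF perm Lr] by blast
qed
lemma conj_exists:
  fixes n d r :: nat
  assumes d0: "0 < d" and n: "n = d * r" and perm: "\<alpha> permutes {0..<n}"
    and orbc: "\<forall>x<n. card {(\<alpha> ^^ k) x | k. True} = d"
  shows "\<exists>\<gamma>. bij_betw \<gamma> {0..<n} {0..<n} \<and>
           (\<forall>y<n. \<gamma> (d * (y div d) + (y mod d + 1) mod d) = \<alpha> (\<gamma> y))"
proof -
  define orb where "orb x = {(\<alpha> ^^ k) x | k. True}" for x
  have inj: "inj \<alpha>" using perm permutes_inj by blast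
  have injk: "inj (\<alpha>^^k)" for k using inj_fn[OF inj] .
  have lt: "\<And>i x. x < n \<Longrightarrow> (\<alpha>^^i) x < n" using funpow_lt[OF perm] by blast
  have per: "(\<alpha>^^d) x = x" if "x < n" for x
    using orbit_period(1)[OF inj _ d0] orbc that by blast
  have minp: "d \<le> q" if "x < n" "0 < q" "(\<alpha>^^q) x = x" for x q
    using orbit_period(2)[OF inj _ d0] orbc that by blast
  have uniq: "i = j" if "x < n" "i < d" "j < d" "(\<alpha>^^i) x = (\<alpha>^^j) x" for x i j
  proof (rule ccontr)
    have key: "False" if "x < n" "i < j" "j < d" "(\<alpha>^^i) x = (\<alpha>^^j) x" for i j
    proof -
      have "(\<alpha>^^i) ((\<alpha>^^(j-i)) x) = (\<alpha>^^i) x"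
        using that by (metis add_diff_inverse_nat funpow_add less_imp_not_less o_apply)
      hence "(\<alpha>^^(j-i)) x = x" using injk[of i] by (meson injD)
      thus False using minp[of x "j-i"] that by simp
    qed
    assume "i \<noteq> j"
    thus False using key[of i j] key[of j i] that by (metis linorder_neqE_nat)
  qed
  have orbsub: "orb x \<subseteq> {0..<n}" if "x < n" for x
    using lt that unfolding orb_def by auto
  have inorb: "(\<alpha>^^k) x \<in> orb x" for k x unfolding orb_def by blast
  have orbs: "orb ((\<alpha>^^k) x) \<subseteq> orb x" for k x
  proof
    fix w assume "w \<in> orb ((\<alpha>^^k) x)"
    then obtain j where "w = (\<alpha>^^j) ((\<alpha>^^k) x)" unfolding orb_def by blast
    hence "w = (\<alpha>^^(j+k)) x" by (simp add: funpow_add)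
    thus "w \<in> orb x" unfolding orb_def by blast
  qed
  have orbeq: "orb ((\<alpha>^^k) x) = orb x" if "x < n" for k x
  proof
    show "orb ((\<alpha>^^k) x) \<subseteq> orb x" by (rule orbs)
  next
    have "x = (\<alpha>^^(d - k mod d)) ((\<alpha>^^k) x)"
    proof -
      have "(\<alpha>^^(d - k mod d)) ((\<alpha>^^k) x) = (\<alpha>^^(d - k mod d + k)) x"
        by (simp add: funpow_add)
      also have "\<dots> = (\<alpha>^^((d - k mod d + k) mod d)) x"
        using funpow_mod_eq[where f=\<alpha> and n=d and x=x] per[OF that] by simp
      also have "(d - k mod d + k) mod d = 0"
      proof -
        have "d - k mod d + k = d + (k - k mod d)" using d0 by (simp add: le_mod_geq)
        also have "k - k mod d = d * (k div d)" by (simp add: minus_mod_eq_mult_div)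
        finally show ?thesis by simp
      qed
      finally show ?thesis by simp
    qed
    hence "x \<in> orb ((\<alpha>^^k) x)" using inorb by metis
    then obtain k' where "x = (\<alpha>^^k') ((\<alpha>^^k) x)" unfolding orb_def by blast
    thus "orb x \<subseteq> orb ((\<alpha>^^k) x)" using orbs by metis
  qed
  have orbeq2: "orb y = orb x" if "x < n" "y \<in> orb x" for x y
    using orbeq that unfolding orb_def by blast
  define Os where "Os = orb ` {0..<n}"
  have finOs: "finite Os" unfolding Os_def by simp
  have UOs: "\<Union>Os = {0..<n}"
  proof
    show "\<Union>Os \<subseteq> {0..<n}" unfolding Os_def using orbsub by fastforce
    show "{0..<n} \<subseteq> \<Union>Os" unfolding Os_def using inorb[of 0] by force
  qed
  have cOs: "\<forall>c\<in>Os. card c = d" unfolding Os_def orb_def using orbc by auto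
  have dOs: "\<forall>c1\<in>Os. \<forall>c2\<in>Os. c1 \<noteq> c2 \<longrightarrow> c1 \<inter> c2 = {}"
  proof (intro ballI impI)
    fix c1 c2 assume c: "c1 \<in> Os" "c2 \<in> Os" "c1 \<noteq> c2"
    from c(1) obtain x1 where x1: "x1 \<in> {0..<n}" "c1 = orb x1" unfolding Os_def by blast
    from c(2) obtain x2 where x2: "x2 \<in> {0..<n}" "c2 = orb x2" unfolding Os_def by blast
    have x: "x1 < n" "x2 < n" "c1 = orb x1" "c2 = orb x2" using x1 x2 by auto
    show "c1 \<inter> c2 = {}"
    proof (rule ccontr)
      assume "c1 \<inter> c2 \<noteq> {}"
      then obtain z where "z \<in> orb x1" "z \<in> orb x2" using x by auto
      hence "orb x1 = orb x2" using orbeq2 x by metis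
      thus False using c x by simp
    qed
  qed
  have "d * card Os = card (\<Union>Os)"
    by (rule card_partition) (use finOs UOs cOs dOs in auto)
  hence cardOs: "card Os = r" using UOs n d0 by simp
  obtain e where e: "bij_betw e {0..<r} Os" using ex_bij_betw_nat_finite[OF finOs] cardOs by metis
  define rep where "rep i = (SOME x. x < n \<and> e i = orb x)" for i
  have rep: "rep i < n \<and> e i = orb (rep i)" if "i < r" for i
  proof -
    have "e i \<in> Os" using e that unfolding bij_betw_def by auto
    then obtain x where "x \<in> {0..<n}" "e i = orb x" unfolding Os_def by blast
    hence "x < n \<and> e i = orb x" by simp
    thus ?thesis unfolding rep_def by (rule someI)
  qed
  define \<gamma> where "\<gamma> y = (\<alpha>^^(y mod d)) (rep (y div d))" for y
  have ydiv: "y div d < r" if "y < n" for y using that n d0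
    by (simp add: less_mult_imp_div_less mult.commute)
  have grange: "\<gamma> y < n" if "y < n" for y unfolding \<gamma>_def using lt rep ydiv that by blast
  have ginj: "inj_on \<gamma> {0..<n}"
  proof (rule inj_onI)
    fix y1 y2 assume y: "y1 \<in> {0..<n}" "y2 \<in> {0..<n}" "\<gamma> y1 = \<gamma> y2"
    let ?i1 = "y1 div d" and ?i2 = "y2 div d"
    have r1: "rep ?i1 < n" "e ?i1 = orb (rep ?i1)" using rep ydiv y by auto
    have r2: "rep ?i2 < n" "e ?i2 = orb (rep ?i2)" using rep ydiv y by auto
    have "orb (rep ?i1) = orb (\<gamma> y1)" unfolding \<gamma>_def using orbeq r1 by metis
    also have "\<dots> = orb (rep ?i2)" unfolding y(3) unfolding \<gamma>_def using orbeq r2 by metis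
    finally have "e ?i1 = e ?i2" using r1 r2 by simp
    hence i: "?i1 = ?i2" using e ydiv y unfolding bij_betw_def inj_on_def by auto
    hence "(\<alpha>^^(y1 mod d)) (rep ?i1) = (\<alpha>^^(y2 mod d)) (rep ?i1)" using y(3) unfolding \<gamma>_def by simp
    hence "y1 mod d = y2 mod d" using uniq r1 d0 by simp
    with i show "y1 = y2" by (metis div_mult_mod_eq)
  qed
  have "\<gamma> ` {0..<n} = {0..<n}"
    by (rule endo_inj_surj) (use grange ginj in auto)
  hence bij: "bij_betw \<gamma> {0..<n} {0..<n}" using ginj unfolding bij_betw_def by simp
  have cj: "\<gamma> (d * (y div d) + (y mod d + 1) mod d) = \<alpha> (\<gamma> y)" if "y < n" for y
  proof -
    let ?z = "d * (y div d) + (y mod d + 1) mod d"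
    have zd: "?z div d = y div d" "?z mod d = (y mod d + 1) mod d" using d0 by auto
    have r1: "rep (y div d) < n" using rep ydiv that by auto
    have "(\<alpha>^^((y mod d + 1) mod d)) (rep (y div d)) = (\<alpha>^^(y mod d + 1)) (rep (y div d))"
      using funpow_mod_eq[where f=\<alpha> and n=d] per[OF r1] by simp
    thus ?thesis unfolding \<gamma>_def zd by simp
  qed
  show ?thesis using bij cj by blast
qed
lemma mod_cancel_nat:
  fixes k a b r :: nat
  assumes "(k + a) mod r = (k + b) mod r" "a < r" "b < r" shows "a = b"
proof (rule ccontr)
  assume ne: "a \<noteq> b"
  have "int ((k + a) mod r) = int ((k + b) mod r)" using assms by simp
  hence "(int k + int a) mod int r = (int k + int b) mod int r" by (simp add: of_nat_mod)
  hence "int r dvd (int k + int a) - (int k + int b)" using mod_eq_dvd_iff by blast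
  hence "int r dvd (int a - int b)" by simp
  hence "\<bar>int r\<bar> \<le> \<bar>int a - int b\<bar>" using ne by (intro dvd_imp_le_int) auto
  thus False using assms by simp
qed

lemma divmod_pair:
  fixes d q w :: nat
  assumes "w < d" shows "(d * q + w) div d = q" "(d * q + w) mod d = w"
  using assms by auto

lemma product:
  fixes d r n :: nat
  assumes d0: "0 < d" and r0: "0 < r" and n: "n = d * r"
    and LS1: "latin_square d L1"
    and E1: "\<forall>x<d. \<forall>y<d. L1 ((y+1) mod d) ((x+1) mod d) = (L1 x y + 1) mod d"
  shows "\<exists>L0. latin_square n L0 \<and>
     (\<forall>x<n. \<forall>y<n. L0 (d * (y div d) + (y mod d + 1) mod d) (d * (x div d) + (x mod d + 1) mod d)
                 = d * (L0 x y div d) + (L0 x y mod d + 1) mod d)"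
proof -
  have L1r: "\<And>x y. x < d \<Longrightarrow> y < d \<Longrightarrow> L1 x y < d" and
    L1row: "\<And>x. x < d \<Longrightarrow> inj_on (\<lambda>y. L1 x y) {0..<d}" and
    L1col: "\<And>y. y < d \<Longrightarrow> inj_on (\<lambda>x. L1 x y) {0..<d}"
    using LS1 unfolding latin_square_def by auto
  define L0 where "L0 x y = d * ((x div d + y div d) mod r) + L1 (x mod d) (y mod d)" for x y
  have bnd: "d * q + w < n" if "q < r" "w < d" for q w
  proof -
    have "d * q + w < d * q + d" using that by simp
    also have "\<dots> = d * (q + 1)" by simp
    also have "\<dots> \<le> d * r" using that by (intro mult_le_mono2) simp
    finally show ?thesis using n by simp
  qed
  have L0dm: "L0 x y div d = (x div d + y div d) mod r" "L0 x y mod d = L1 (x mod d) (y mod d)" for x y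
    unfolding L0_def using divmod_pair L1r d0 by auto
  have L0r: "L0 x y < n" for x y unfolding L0_def using bnd L1r d0 r0 by simp
  have dq: "x div d < r" if "x < n" for x using that n d0
    by (simp add: less_mult_imp_div_less mult.commute)
  have eqv: "a = b" if "a div d = b div d" "a mod d = b mod d" for a b :: nat
  proof -
    have "a = d * (a div d) + a mod d" by simp
    also have "\<dots> = d * (b div d) + b mod d" using that by simp
    also have "\<dots> = b" by simp
    finally show ?thesis .
  qed
  have "latin_square n L0"
    unfolding latin_square_def
  proof (intro conjI allI impI)
    show "\<And>x y. x < n \<Longrightarrow> y < n \<Longrightarrow> L0 x y < n" using L0r by simp
  next
    fix x assume x: "x < n"
    show "inj_on (\<lambda>y. L0 x y) {0..<n}"
    proof (rule inj_onI)
      fix a b assume ab: "a \<in> {0..<n}" "b \<in> {0..<n}" "L0 x a = L0 x b"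
      have "L0 x a div d = L0 x b div d" using ab(3) by simp
      hence "(x div d + a div d) mod r = (x div d + b div d) mod r" unfolding L0dm(1) .
      hence 1: "a div d = b div d" by (rule mod_cancel_nat) (use dq ab in auto)
      have "L0 x a mod d = L0 x b mod d" using ab(3) by simp
      hence "L1 (x mod d) (a mod d) = L1 (x mod d) (b mod d)" unfolding L0dm(2) .
      hence 2: "a mod d = b mod d" by (rule inj_onD[OF L1row[of "x mod d", OF mod_less_divisor[OF d0]]]) (use d0 in auto)
      show "a = b" using eqv 1 2 .
    qed
  next
    fix y assume y: "y < n"
    show "inj_on (\<lambda>x. L0 x y) {0..<n}"
    proof (rule inj_onI)
      fix a b assume ab: "a \<in> {0..<n}" "b \<in> {0..<n}" "L0 a y = L0 b y"
      have "L0 a y div d = L0 b y div d" using ab(3) by simp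
      hence "(y div d + a div d) mod r = (y div d + b div d) mod r" unfolding L0dm(1) by (simp add: add.commute)
      hence 1: "a div d = b div d" by (rule mod_cancel_nat) (use dq ab in auto)
      have "L0 a y mod d = L0 b y mod d" using ab(3) by simp
      hence "L1 (a mod d) (y mod d) = L1 (b mod d) (y mod d)" unfolding L0dm(2) .
      hence 2: "a mod d = b mod d" by (rule inj_onD[OF L1col[of "y mod d", OF mod_less_divisor[OF d0]]]) (use d0 in auto)
      show "a = b" using eqv 1 2 .
    qed
  qed
  moreover have "\<forall>x<n. \<forall>y<n. L0 (d * (y div d) + (y mod d + 1) mod d) (d * (x div d) + (x mod d + 1) mod d)
                 = d * (L0 x y div d) + (L0 x y mod d + 1) mod d"
  proof (intro allI impI)
    fix x y assume xy: "x < n" "y < n"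
    have m: "(z mod d + 1) mod d < d" for z using d0 by simp
    have "L0 (d * (y div d) + (y mod d + 1) mod d) (d * (x div d) + (x mod d + 1) mod d)
        = d * ((y div d + x div d) mod r) + L1 ((y mod d + 1) mod d) ((x mod d + 1) mod d)"
      unfolding L0_def using divmod_pair[OF m] by simp
    also have "\<dots> = d * ((x div d + y div d) mod r) + (L1 (x mod d) (y mod d) + 1) mod d"
      using E1 d0 by (simp add: add.commute)
    also have "\<dots> = d * (L0 x y div d) + (L0 x y mod d + 1) mod d" using L0dm by simp
    finally show "L0 (d * (y div d) + (y mod d + 1) mod d) (d * (x div d) + (x mod d + 1) mod d)
                 = d * (L0 x y div d) + (L0 x y mod d + 1) mod d" .
  qed
  ultimately show ?thesis by blast
qed

lemma cyc4:
  fixes d :: nat assumes d0: "0 < d" and d4: "d mod 4 = 0"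
  shows "\<exists>L1. latin_square d L1 \<and> (\<forall>x<d. \<forall>y<d. L1 ((y+1) mod d) ((x+1) mod d) = (L1 x y + 1) mod d)"
proof -
  define k where "k = int d div 4"
  have dk: "int d = 4 * k" unfolding k_def using d4 by presburger
  have k0: "0 < k" using dk d0 by simp
  define L1 where "L1 x y = nat (Ff k (int x) (int y))" for x y
  have Fr: "0 \<le> Ff k a b" "Ff k a b < 4*k" for a b using F_range[OF k0] by auto
  have iL: "int (L1 x y) = Ff k (int x) (int y)" for x y unfolding L1_def using Fr by simp
  have "latin_square d L1"
    unfolding latin_square_def
  proof (intro conjI allI impI)
    fix x y assume "x < d" "y < d"
    have "int (L1 x y) < int d" using iL Fr dk by simp
    thus "L1 x y < d" by simp
  next
    fix x assume x: "x < d"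
    show "inj_on (\<lambda>y. L1 x y) {0..<d}"
    proof (rule inj_onI)
      fix a b assume ab: "a \<in> {0..<d}" "b \<in> {0..<d}" "L1 x a = L1 x b"
      hence "Ff k (int x) (int a) = Ff k (int x) (int b)" using iL by metis
      hence "int a = int b" by (rule F_row[OF k0, rotated 4]) (use ab dk in auto)
      thus "a = b" by simp
    qed
  next
    fix y assume y: "y < d"
    show "inj_on (\<lambda>x. L1 x y) {0..<d}"
    proof (rule inj_onI)
      fix a b assume ab: "a \<in> {0..<d}" "b \<in> {0..<d}" "L1 a y = L1 b y"
      hence "Ff k (int a) (int y) = Ff k (int b) (int y)" using iL by metis
      hence "int a = int b" by (rule F_col[OF k0, rotated 4]) (use ab dk in auto)
      thus "a = b" by simp
    qed
  qed
  moreover have "\<forall>x<d. \<forall>y<d. L1 ((y+1) mod d) ((x+1) mod d) = (L1 x y + 1) mod d"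
  proof (intro allI impI)
    fix x y assume xy: "x < d" "y < d"
    have m: "int ((z+1) mod d) = (int z + 1) mod (4*k)" for z using dk by (simp add: of_nat_mod ac_simps)
    have "int (L1 ((y+1) mod d) ((x+1) mod d)) = Ff k ((int y + 1) mod (4*k)) ((int x + 1) mod (4*k))"
      using iL m by simp
    also have "\<dots> = (Ff k (int x) (int y) + 1) mod (4*k)"
      by (rule F_equiv[OF k0]) (use xy dk in auto)
    also have "\<dots> = int ((L1 x y + 1) mod d)" using iL dk by (simp add: of_nat_mod ac_simps)
    finally show "L1 ((y+1) mod d) ((x+1) mod d) = (L1 x y + 1) mod d" by simp
  qed
  ultimately show ?thesis by blast
qed

lemma cycodd:
  fixes d :: nat assumes d0: "0 < d" and od: "odd d"
  shows "\<exists>L1. latin_square d L1 \<and> (\<forall>x<d. \<forall>y<d. L1 ((y+1) mod d) ((x+1) mod d) = (L1 x y + 1) mod d)"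
proof -
  define c where "c = (d + 1) div 2"
  have c2: "2 * c = d + 1" unfolding c_def using od by simp
  define L1 where "L1 x y = ((x + y) * c) mod d" for x y
  have canc: "u mod d = v mod d" if "(u * c) mod d = (v * c) mod d" for u v
  proof -
    have "(u * c * 2) mod d = ((u * c) mod d * 2) mod d" "(v * c * 2) mod d = ((v * c) mod d * 2) mod d"
      by (simp_all add: mod_mult_left_eq)
    hence "(u * c * 2) mod d = (v * c * 2) mod d" using that by simp
    moreover have "w * c * 2 = w * d + w" for w
    proof -
      have "w * c * 2 = w * (2 * c)" by (simp add: ac_simps)
      also have "\<dots> = w * (d + 1)" using c2 by simp
      finally show ?thesis by simp
    qed
    ultimately have "(u * d + u) mod d = (v * d + v) mod d" by simp
    thus ?thesis by simp
  qed
  have "latin_square d L1"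
    unfolding latin_square_def
  proof (intro conjI allI impI)
    fix x y assume "x < d" "y < d"
    thus "L1 x y < d" unfolding L1_def using d0 by simp
  next
    fix x assume x: "x < d"
    show "inj_on (\<lambda>y. L1 x y) {0..<d}"
    proof (rule inj_onI)
      fix a b assume ab: "a \<in> {0..<d}" "b \<in> {0..<d}" "L1 x a = L1 x b"
      hence "(x + a) mod d = (x + b) mod d" using canc unfolding L1_def by blast
      thus "a = b" by (rule mod_cancel_nat) (use ab in auto)
    qed
  next
    fix y assume y: "y < d"
    show "inj_on (\<lambda>x. L1 x y) {0..<d}"
    proof (rule inj_onI)
      fix a b assume ab: "a \<in> {0..<d}" "b \<in> {0..<d}" "L1 a y = L1 b y"
      hence "(a + y) mod d = (b + y) mod d" using canc unfolding L1_def by blast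
      hence "(y + a) mod d = (y + b) mod d" by (simp add: add.commute)
      thus "a = b" by (rule mod_cancel_nat) (use ab in auto)
    qed
  qed
  moreover have "\<forall>x<d. \<forall>y<d. L1 ((y+1) mod d) ((x+1) mod d) = (L1 x y + 1) mod d"
  proof (intro allI impI)
    fix x y assume xy: "x < d" "y < d"
    have "L1 ((y+1) mod d) ((x+1) mod d) = (((y+1) mod d + (x+1) mod d) * c) mod d"
      unfolding L1_def by simp
    also have "\<dots> = ((((y+1) mod d + (x+1) mod d) mod d) * c) mod d" by (simp add: mod_mult_left_eq)
    also have "((y+1) mod d + (x+1) mod d) mod d = (y + 1 + (x + 1)) mod d" by (simp add: mod_add_eq)
    also have "((y + 1 + (x + 1)) mod d * c) mod d = ((y + 1 + (x + 1)) * c) mod d" by (simp add: mod_mult_left_eq)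
    also have "(y + 1 + (x + 1)) * c = (x + y) * c + (d + 1)" using c2 by (simp add: algebra_simps)
    also have "((x + y) * c + (d + 1)) mod d = ((x + y) * c + 1) mod d"
      using mod_add_self2[of "(x + y) * c + 1" d] by (simp add: ac_simps)
    also have "\<dots> = (L1 x y + 1) mod d" unfolding L1_def by (rule mod_add_left_eq[symmetric])
    finally show "L1 ((y+1) mod d) ((x+1) mod d) = (L1 x y + 1) mod d" .
  qed
  ultimately show ?thesis by blast
qed


lemma cyc_exists:
  fixes d :: nat
  assumes "0 < d" "d mod 4 \<noteq> 2"
  shows "\<exists>L1. latin_square d L1 \<and> (\<forall>x<d. \<forall>y<d. L1 ((y+1) mod d) ((x+1) mod d) = (L1 x y + 1) mod d)"
proof (cases "odd d")
  case True show ?thesis by (rule cycodd[OF assms(1) True])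
next
  case False
  hence "d mod 4 = 0" using assms(2) by presburger
  show ?thesis by (rule cyc4[OF assms(1) \<open>d mod 4 = 0\<close>])
qed

theorem corollary4p12:
  fixes d r n :: nat and \<alpha> :: "nat \<Rightarrow> nat"
  assumes "0 < d" and "0 < r" and "n = d * r"
    and "\<alpha> permutes {0..<n}"
    and "cycle_structure_uniform n \<alpha> d r"
  shows "in_Par12 n \<alpha> \<alpha> \<alpha> \<longleftrightarrow> d mod 4 \<noteq> 2"
proof
  assume "in_Par12 n \<alpha> \<alpha> \<alpha>"
  thus "d mod 4 \<noteq> 2" using necessity assms by blast
next
  assume d4: "d mod 4 \<noteq> 2"
  obtain L1 where L1: "latin_square d L1"
    "\<forall>x<d. \<forall>y<d. L1 ((y+1) mod d) ((x+1) mod d) = (L1 x y + 1) mod d"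
    using cyc_exists[OF assms(1) d4] by blast
  obtain L0 where L0: "latin_square n L0"
    "\<forall>x<n. \<forall>y<n. L0 (d * (y div d) + (y mod d + 1) mod d) (d * (x div d) + (x mod d + 1) mod d)
                 = d * (L0 x y div d) + (L0 x y mod d + 1) mod d"
    using product[OF assms(1,2,3) L1] by blast
  have orbc: "\<forall>x<n. card {(\<alpha> ^^ k) x | k. True} = d"
    using assms(5) unfolding cycle_structure_uniform_def by blast
  obtain \<gamma> where g: "bij_betw \<gamma> {0..<n} {0..<n}"
    "\<forall>y<n. \<gamma> (d * (y div d) + (y mod d + 1) mod d) = \<alpha> (\<gamma> y)"
    using conj_exists[OF assms(1,3,4) orbc] by blast
  have a0: "\<forall>y<n. d * (y div d) + (y mod d + 1) mod d < n"
  proof (intro allI impI)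
    fix y assume y: "y < n"
    have q: "y div d < r" using y assms(1,3) by (simp add: less_mult_imp_div_less mult.commute)
    have "d * (y div d) + (y mod d + 1) mod d < d * (y div d) + d" using assms(1) by simp
    also have "\<dots> = d * (y div d + 1)" by simp
    also have "\<dots> \<le> d * r" using q by (intro mult_le_mono2) simp
    finally show "d * (y div d) + (y mod d + 1) mod d < n" using assms(3) by simp
  qed
  show "in_Par12 n \<alpha> \<alpha> \<alpha>"
    by (rule transport[where af="\<lambda>y. d * (y div d) + (y mod d + 1) mod d", OF assms(4) g(1)])
       (use g(2) a0 L0 in auto)
qed

end
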